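(* Fix a firm $A\subset\mathcal{A}$, a full-support skill distribution $p$, a full-support perception $q$, and signal structures with $\langle S',\pi'\rangle\succsim_G\langle S,\pi\rangle$ via a garbling kernel $g$. Fix surplus-maximizing selections $\widehat a_s$ ($s\in S$) and $\widehat a'_{s'}$ ($s'\in S'$) as in the context. (a) $W_A(p,q,\langle S',\pi'\rangle)-W_A(p,q,\langle S,\pi\rangle)=\mathcal{C}_A(p,q,\langle S,\pi\rangle,\langle S',\pi'\rangle)+\mathcal{I}_A(p,q,\langle S,\pi\rangle,\langle S',\pi'\rangle)$. (b) $\mathcal{I}_A(p,q,\langle S,\pi\rangle,\langle S',\pi'\rangle)\ge 0$. Suppose in addition that $A\subset\mathcal{A}_M$ and that $\langle S',\pi'\rangle$ is MLR. Then: (c) if $p\succsim_{LR}q$, then $\mathcal{C}_A(p,q,\langle S,\pi\rangle,\langle S',\pi'\rangle)\ge 0$; (d) if $q\succsim_{LR}p$, then $\mathcal{C}_A(p,q,\langle S,\pi\rangle,\langle S',\pi'\rangle)\le 0$.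
   Context: Let $\Theta\subset\mathbb{R}$ be a finite set of skill types with $|\Theta|\ge 2$. A task is a vector $a\in\mathcal{A}:=\mathbb{R}^\Theta$. A firm is a non-empty finite set $A\subset\mathcal{A}$. The firm is monotone if $A\subset\mathcal{A}_M:=\{a\in\mathbb{R}^\Theta: a(\theta')>a(\theta)\text{ whenever }\theta'>\theta\}$. A signal structure $\langle S,\pi\rangle$ consists of a non-empty finite set $S$ and a map $\pi:S\times\Theta\to[0,1]$ with $\sum_{s}\pi(s|\theta)=1$ for each $\theta$, such that every $s\in S$ has $\pi(s|\theta)>0$ for some $\theta$. Distributions and pay: - $p,q\in\Delta(\Theta)$ have full support. - Posterior: $q_{\langle S,\pi\rangle}(\theta|s):=q(\theta)\pi(s|\theta)/\sum_{\theta'}q(\theta')\pi(s|\theta')$. - Pay: $w_A(s,q,\langle S,\pi\rangle):=\max_{a\in A}\sum_\theta q_{\langle S,\pi\rangle}(\theta|s)a(\theta)$. - Average pay: $W_A(p,q,\langle S,\pi\rangle):=\sum_\theta p(\theta)\sum_s\pi(s|\theta)w_A(s,q,\langle S,\pi\rangle)$. Orders on distributions and signal structures: - $q'\succsim_{LR}q$ means $q(\theta)q'(\theta')\ge q(\theta')q'(\theta)$ whenever $\theta'>\theta$. - $\langle S',\pi'\rangle\succsim_G\langle S,\pi\rangle$ means there is a garbling kernel $g:S\times S'\to[0,1]$ with $\sum_{s}g(s|s')=1$ for each $s'$ and $\pi(s|\theta)=\sum_{s'}g(s|s')\pi'(s'|\theta)$ for all $s,\theta$. - $\langle S,\pi\rangle$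 is MLR if $S\subset\mathbb{R}$ and $\pi(s|\theta)\pi(s'|\theta')\ge\pi(s|\theta')\pi(s'|\theta)$ whenever $s'>s$ and $\theta'>\theta$. Joint distributions: define $\mu_p,\mu_q\in\Delta(\Theta\times S\times S')$ by $\mu_r(\theta,s,s'):=r(\theta)\pi'(s'|\theta)g(s|s')$ for $r\in\{p,q\}$. Marginals and conditionals such as $\mu_r(s)$, $\mu_r(s'|s)$, $\mu_r(\theta|s,s')$ are derived from these in the usual way; summands whose conditioning event has zero probability are taken to be zero. Task selections: $\widehat a_s\in\arg\max_{a\in A}\sum_\theta q_{\langle S,\pi\rangle}(\theta|s)a(\theta)$ for each $s\in S$, and $\widehat a'_{s'}\in\arg\max_{a\in A}\sum_\theta q_{\langle S',\pi'\rangle}(\theta|s')a(\theta)$ for each $s'\in S'$. Components: - Perception-correcting: $\mathcal{C}_A(p,q,\langle S,\pi\rangle,\langle S',\pi'\rangle):=\sum_{s}\mu_p(s)\sum_{s'}[\mu_p(s'|s)-\mu_q(s'|s)]\sum_\theta\mu_q(\theta|s,s')\widehat a_s(\theta)$. - Instrumental: $\mathcal{I}_A(p,q,\langle S,\pi\rangle,\langle S',\pi'\rangle):=\sum_{s'}\mu_p(s')\sum_\theta q_{\langle S',\pi'\rangle}(\theta|s')\big[\widehat a'_{s'}(\theta)-\sum_s g(s|s')\widehat a_s(\theta)\big]$, which equals $\sum_s\mu_p(s)\sum_{s'}\mu_p(s'|s)\sum_\theta\mu_q(\theta|s,s')[\widehat a'_{s'}(\theta)-\widehat a_s(\theta)]$.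 *)

theory Defs
  imports Complex_Main
begin

(* Skill types: a finite set Th of reals. Tasks: functions real => real (only values on Th matter). Signal structures: a finite set S and pr :: 's => real => real,
   pr s th = pr(s|th). Division by zero is 0 in Isabelle, which realises the convention that
   summands with zero-probability conditioning events vanish. *)

definition full_support_dist :: "real set \<Rightarrow> (real \<Rightarrow> real) \<Rightarrow> bool" where
  "full_support_dist Th r \<longleftrightarrow> (\<forall>th\<in>Th. r th > 0) \<and> (\<Sum>th\<in>Th. r th) = 1"

definition signal_structure :: "real set \<Rightarrow> 's set \<Rightarrow> ('s \<Rightarrow> real \<Rightarrow> real) \<Rightarrow> bool" where
  "signal_structure Th S pr \<longleftrightarrow> finite S \<and> S \<noteq> {} \<and>
     (\<forall>s\<in>S. \<forall>th\<in>Th. 0 \<le> pr s th \<and> pr s th \<le> 1) \<and>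
     (\<forall>th\<in>Th. (\<Sum>s\<in>S. pr s th) = 1) \<and>
     (\<forall>s\<in>S. \<exists>th\<in>Th. pr s th > 0)"

definition firm :: "(real \<Rightarrow> real) set \<Rightarrow> bool" where
  "firm A \<longleftrightarrow> finite A \<and> A \<noteq> {}"

definition monotone_task :: "real set \<Rightarrow> (real \<Rightarrow> real) \<Rightarrow> bool" where
  "monotone_task Th a \<longleftrightarrow> (\<forall>th\<in>Th. \<forall>th'\<in>Th. th' > th \<longrightarrow> a th' > a th)"

definition monotone_firm :: "real set \<Rightarrow> (real \<Rightarrow> real) set \<Rightarrow> bool" where
  "monotone_firm Th A \<longleftrightarrow> (\<forall>a\<in>A. monotone_task Th a)"

definition posterior :: "real set \<Rightarrow> (real \<Rightarrow> real) \<Rightarrow> ('s \<Rightarrow> real \<Rightarrow> real) \<Rightarrow> 's \<Rightarrow> real \<Rightarrow> real" where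
  "posterior Th q pr s th = q th * pr s th / (\<Sum>th'\<in>Th. q th' * pr s th')"

definition expect :: "real set \<Rightarrow> (real \<Rightarrow> real) \<Rightarrow> (real \<Rightarrow> real) \<Rightarrow> real" where
  "expect Th r a = (\<Sum>th\<in>Th. r th * a th)"

definition pay :: "(real \<Rightarrow> real) set \<Rightarrow> real set \<Rightarrow> 's \<Rightarrow> (real \<Rightarrow> real) \<Rightarrow> ('s \<Rightarrow> real \<Rightarrow> real) \<Rightarrow> real" where
  "pay A Th s q pr = Max ((\<lambda>a. expect Th (posterior Th q pr s) a) ` A)"

definition avg_pay :: "(real \<Rightarrow> real) set \<Rightarrow> real set \<Rightarrow> (real \<Rightarrow> real) \<Rightarrow> (real \<Rightarrow> real) \<Rightarrow> 's set \<Rightarrow> ('s \<Rightarrow> real \<Rightarrow> real) \<Rightarrow> real" where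
  "avg_pay A Th p q S pr = (\<Sum>th\<in>Th. p th * (\<Sum>s\<in>S. pr s th * pay A Th s q pr))"

definition lr_ge :: "real set \<Rightarrow> (real \<Rightarrow> real) \<Rightarrow> (real \<Rightarrow> real) \<Rightarrow> bool" where
  "lr_ge Th q' q \<longleftrightarrow> (\<forall>th\<in>Th. \<forall>th'\<in>Th. th' > th \<longrightarrow> q th * q' th' \<ge> q th' * q' th)"

(* g is a garbling kernel showing <S',pr'> >=_G <S,pr>; g s s' = g(s|s') *)
definition garbling :: "real set \<Rightarrow> 's set \<Rightarrow> ('s \<Rightarrow> real \<Rightarrow> real) \<Rightarrow> 't set \<Rightarrow> ('t \<Rightarrow> real \<Rightarrow> real) \<Rightarrow> ('s \<Rightarrow> 't \<Rightarrow> real) \<Rightarrow> bool" where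
  "garbling Th S pr S' pr' g \<longleftrightarrow>
     (\<forall>s\<in>S. \<forall>s'\<in>S'. 0 \<le> g s s' \<and> g s s' \<le> 1) \<and>
     (\<forall>s'\<in>S'. (\<Sum>s\<in>S. g s s') = 1) \<and>
     (\<forall>s\<in>S. \<forall>th\<in>Th. pr s th = (\<Sum>s'\<in>S'. g s s' * pr' s' th))"

definition MLR :: "real set \<Rightarrow> real set \<Rightarrow> (real \<Rightarrow> real \<Rightarrow> real) \<Rightarrow> bool" where
  "MLR Th S pr \<longleftrightarrow> (\<forall>s\<in>S. \<forall>s'\<in>S. \<forall>th\<in>Th. \<forall>th'\<in>Th. s' > s \<and> th' > th \<longrightarrow>
       pr s th * pr s' th' \<ge> pr s th' * pr s' th)"

definition mu :: "(real \<Rightarrow> real) \<Rightarrow> ('t \<Rightarrow> real \<Rightarrow> real) \<Rightarrow> ('s \<Rightarrow> 't \<Rightarrow> real) \<Rightarrow> real \<Rightarrow> 's \<Rightarrow> 't \<Rightarrow> real" where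
  "mu r pr' g th s s' = r th * pr' s' th * g s s'"

definition mu_s :: "real set \<Rightarrow> 't set \<Rightarrow> (real \<Rightarrow> real) \<Rightarrow> ('t \<Rightarrow> real \<Rightarrow> real) \<Rightarrow> ('s \<Rightarrow> 't \<Rightarrow> real) \<Rightarrow> 's \<Rightarrow> real" where
  "mu_s Th S' r pr' g s = (\<Sum>th\<in>Th. \<Sum>s'\<in>S'. mu r pr' g th s s')"

definition mu_s' :: "real set \<Rightarrow> 's set \<Rightarrow> (real \<Rightarrow> real) \<Rightarrow> ('t \<Rightarrow> real \<Rightarrow> real) \<Rightarrow> ('s \<Rightarrow> 't \<Rightarrow> real) \<Rightarrow> 't \<Rightarrow> real" where
  "mu_s' Th S r pr' g s' = (\<Sum>th\<in>Th. \<Sum>s\<in>S. mu r pr' g th s s')"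

definition mu_ss' :: "real set \<Rightarrow> (real \<Rightarrow> real) \<Rightarrow> ('t \<Rightarrow> real \<Rightarrow> real) \<Rightarrow> ('s \<Rightarrow> 't \<Rightarrow> real) \<Rightarrow> 's \<Rightarrow> 't \<Rightarrow> real" where
  "mu_ss' Th r pr' g s s' = (\<Sum>th\<in>Th. mu r pr' g th s s')"

definition mu_s'_given_s :: "real set \<Rightarrow> 't set \<Rightarrow> (real \<Rightarrow> real) \<Rightarrow> ('t \<Rightarrow> real \<Rightarrow> real) \<Rightarrow> ('s \<Rightarrow> 't \<Rightarrow> real) \<Rightarrow> 't \<Rightarrow> 's \<Rightarrow> real" where
  "mu_s'_given_s Th S' r pr' g s' s = mu_ss' Th r pr' g s s' / mu_s Th S' r pr' g s"

definition mu_th_given_ss' :: "real set \<Rightarrow> (real \<Rightarrow> real) \<Rightarrow> ('t \<Rightarrow> real \<Rightarrow> real) \<Rightarrow> ('s \<Rightarrow> 't \<Rightarrow> real) \<Rightarrow> real \<Rightarrow> 's \<Rightarrow> 't \<Rightarrow> real" where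
  "mu_th_given_ss' Th r pr' g th s s' = mu r pr' g th s s' / mu_ss' Th r pr' g s s'"

definition optimal_selection :: "(real \<Rightarrow> real) set \<Rightarrow> real set \<Rightarrow> (real \<Rightarrow> real) \<Rightarrow> 's set \<Rightarrow> ('s \<Rightarrow> real \<Rightarrow> real) \<Rightarrow> ('s \<Rightarrow> real \<Rightarrow> real) \<Rightarrow> bool" where
  "optimal_selection A Th q S pr ahat \<longleftrightarrow>
     (\<forall>s\<in>S. ahat s \<in> A \<and> (\<forall>a\<in>A. expect Th (posterior Th q pr s) a \<le> expect Th (posterior Th q pr s) (ahat s)))"

definition perception_correcting ::
  "real set \<Rightarrow> (real \<Rightarrow> real) \<Rightarrow> (real \<Rightarrow> real) \<Rightarrow> 's set \<Rightarrow> 't set \<Rightarrow> ('t \<Rightarrow> real \<Rightarrow> real) \<Rightarrow> ('s \<Rightarrow> 't \<Rightarrow> real) \<Rightarrow> ('s \<Rightarrow> real \<Rightarrow> real) \<Rightarrow> real" where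
  "perception_correcting Th p q S S' pr' g ahat =
     (\<Sum>s\<in>S. mu_s Th S' p pr' g s *
        (\<Sum>s'\<in>S'. (mu_s'_given_s Th S' p pr' g s' s - mu_s'_given_s Th S' q pr' g s' s) *
           (\<Sum>th\<in>Th. mu_th_given_ss' Th q pr' g th s s' * ahat s th)))"

definition instrumental ::
  "real set \<Rightarrow> (real \<Rightarrow> real) \<Rightarrow> (real \<Rightarrow> real) \<Rightarrow> 's set \<Rightarrow> 't set \<Rightarrow> ('t \<Rightarrow> real \<Rightarrow> real) \<Rightarrow> ('s \<Rightarrow> 't \<Rightarrow> real) \<Rightarrow> ('s \<Rightarrow> real \<Rightarrow> real) \<Rightarrow> ('t \<Rightarrow> real \<Rightarrow> real) \<Rightarrow> real" where
  "instrumental Th p q S S' pr' g ahat ahat' =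
     (\<Sum>s'\<in>S'. mu_s' Th S p pr' g s' *
        (\<Sum>th\<in>Th. posterior Th q pr' s' th * (ahat' s' th - (\<Sum>s\<in>S. g s s' * ahat s th))))"

end

theory Submission
  imports Defs
begin

lemma double_sum_nonneg:
  fixes h :: "'a \<Rightarrow> 'a \<Rightarrow> real"
  assumes "finite X" "\<And>x y. x \<in> X \<Longrightarrow> y \<in> X \<Longrightarrow> h x y + h y x \<ge> 0"
  shows "(\<Sum>x\<in>X. \<Sum>y\<in>X. h x y) \<ge> 0"
proof -
  have "(\<Sum>x\<in>X. \<Sum>y\<in>X. h x y) = (\<Sum>x\<in>X. \<Sum>y\<in>X. h y x)" by (rule sum.swap)
  hence "2 * (\<Sum>x\<in>X. \<Sum>y\<in>X. h x y) = (\<Sum>x\<in>X. \<Sum>y\<in>X. h x y + h y x)"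
    by (simp add: sum.distrib)
  also have "\<dots> \<ge> 0" by (intro sum_nonneg) (simp add: assms)
  finally show ?thesis by simp
qed

lemma double_sum_nonneg_ord:
  fixes h :: "real \<Rightarrow> real \<Rightarrow> real"
  assumes "finite X" "\<And>x y. x \<in> X \<Longrightarrow> y \<in> X \<Longrightarrow> x < y \<Longrightarrow> h x y + h y x \<ge> 0"
    "\<And>x. x \<in> X \<Longrightarrow> h x x \<ge> 0"
  shows "(\<Sum>x\<in>X. \<Sum>y\<in>X. h x y) \<ge> 0"
proof (rule double_sum_nonneg[OF assms(1)])
  fix x y assume xy: "x \<in> X" "y \<in> X"
  consider "x < y" | "y < x" | "x = y" by linarith
  then show "h x y + h y x \<ge> 0"
  proof cases
    case 1 then show ?thesis using assms(2) xy by blast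
  next
    case 2 then show ?thesis using assms(2)[of y x] xy by linarith
  next
    case 3 then show ?thesis using assms(3) xy by simp
  qed
qed

lemma lr_expect_mono:
  fixes X :: "real set" and u v f :: "real \<Rightarrow> real"
  assumes X: "finite X" and su: "sum u X = 1" and sv: "sum v X = 1"
    and c: "\<And>x y. x \<in> X \<Longrightarrow> y \<in> X \<Longrightarrow> x < y \<Longrightarrow> (f y - f x) * (u x * v y - u y * v x) \<ge> 0"
  shows "(\<Sum>x\<in>X. u x * f x) \<le> (\<Sum>x\<in>X. v x * f x)"
proof -
  have e1: "(\<Sum>x\<in>X. \<Sum>y\<in>X. u x * v y * f y) = (\<Sum>x\<in>X. v x * f x)"
    by (simp add: mult.assoc sum_distrib_left[symmetric] sum_distrib_right[symmetric] su)
  have e2: "(\<Sum>x\<in>X. \<Sum>y\<in>X. u x * v y * f x) = (\<Sum>x\<in>X. u x * f x)"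
  proof -
    have "(\<Sum>x\<in>X. \<Sum>y\<in>X. u x * v y * f x) = (\<Sum>x\<in>X. u x * f x * (\<Sum>y\<in>X. v y))"
      by (simp add: sum_distrib_left mult_ac)
    then show ?thesis by (simp add: sv)
  qed
  have "(\<Sum>x\<in>X. \<Sum>y\<in>X. u x * v y * (f y - f x)) \<ge> 0"
  proof (rule double_sum_nonneg_ord[OF X])
    fix x y assume "x \<in> X" "y \<in> X" "x < y"
    from c[OF this] show "u x * v y * (f y - f x) + u y * v x * (f x - f y) \<ge> 0"
      by (simp add: algebra_simps)
  qed simp
  moreover have "(\<Sum>x\<in>X. \<Sum>y\<in>X. u x * v y * (f y - f x)) =
      (\<Sum>x\<in>X. \<Sum>y\<in>X. u x * v y * f y) - (\<Sum>x\<in>X. \<Sum>y\<in>X. u x * v y * f x)"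
    by (simp add: right_diff_distrib sum_subtractf)
  ultimately show ?thesis using e1 e2 by simp
qed


context
  fixes Th :: "real set" and A :: "(real \<Rightarrow> real) set"
    and p q :: "real \<Rightarrow> real"
    and S :: "'s set" and pr :: "'s \<Rightarrow> real \<Rightarrow> real"
    and S' :: "real set" and pr' :: "real \<Rightarrow> real \<Rightarrow> real"
    and g :: "'s \<Rightarrow> real \<Rightarrow> real"
    and ahat :: "'s \<Rightarrow> real \<Rightarrow> real" and ahat' :: "real \<Rightarrow> real \<Rightarrow> real"
  assumes Th: "finite Th"
    and A: "firm A"
    and p: "full_support_dist Th p" and q: "full_support_dist Th q"
    and S: "signal_structure Th S pr" and S': "signal_structure Th S' pr'"
    and g: "garbling Th S pr S' pr' g"
    and sel: "optimal_selection A Th q S pr ahat"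
    and sel': "optimal_selection A Th q S' pr' ahat'"
begin

lemma finS: "finite S" using S by (simp add: signal_structure_def)
lemma finS': "finite S'" using S' by (simp add: signal_structure_def)
lemma pr_nn: "s \<in> S \<Longrightarrow> th \<in> Th \<Longrightarrow> 0 \<le> pr s th" using S by (simp add: signal_structure_def)
lemma pr'_nn: "s \<in> S' \<Longrightarrow> th \<in> Th \<Longrightarrow> 0 \<le> pr' s th" using S' by (simp add: signal_structure_def)
lemma g_nn: "s \<in> S \<Longrightarrow> s' \<in> S' \<Longrightarrow> 0 \<le> g s s'" using g by (simp add: garbling_def)
lemma g_sum: "s' \<in> S' \<Longrightarrow> (\<Sum>s\<in>S. g s s') = 1" using g by (simp add: garbling_def)
lemma pr_g: "s \<in> S \<Longrightarrow> th \<in> Th \<Longrightarrow> pr s th = (\<Sum>s'\<in>S'. g s s' * pr' s' th)"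
  using g by (simp add: garbling_def)
lemma p_pos: "th \<in> Th \<Longrightarrow> p th > 0" using p by (simp add: full_support_dist_def)
lemma q_pos: "th \<in> Th \<Longrightarrow> q th > 0" using q by (simp add: full_support_dist_def)

lemma wpos_S': assumes r: "\<And>th. th \<in> Th \<Longrightarrow> r th > 0" and s': "s' \<in> S'"
  shows "(\<Sum>th\<in>Th. r th * pr' s' th) > 0"
proof -
  obtain th0 where "th0 \<in> Th" "pr' s' th0 > 0" using S' s' unfolding signal_structure_def by blast
  then show ?thesis
    by (intro sum_pos2[OF Th, of th0]) (use r pr'_nn[OF s'] in \<open>auto intro!: mult_pos_pos mult_nonneg_nonneg less_imp_le[OF r]\<close>)
qed

lemma wpos_S: assumes r: "\<And>th. th \<in> Th \<Longrightarrow> r th > 0" and s: "s \<in> S"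
  shows "(\<Sum>th\<in>Th. r th * pr s th) > 0"
proof -
  obtain th0 where "th0 \<in> Th" "pr s th0 > 0" using S s unfolding signal_structure_def by blast
  then show ?thesis
    by (intro sum_pos2[OF Th, of th0]) (use r pr_nn[OF s] in \<open>auto intro!: mult_pos_pos mult_nonneg_nonneg less_imp_le[OF r]\<close>)
qed

lemma pay_S': "s' \<in> S' \<Longrightarrow> pay A Th s' q pr' = expect Th (posterior Th q pr' s') (ahat' s')"
  unfolding pay_def
  by (rule Max_eqI) (use A sel' in \<open>auto simp: firm_def optimal_selection_def\<close>)

lemma pay_S: "s \<in> S \<Longrightarrow> pay A Th s q pr = expect Th (posterior Th q pr s) (ahat s)"
  unfolding pay_def
  by (rule Max_eqI) (use A sel in \<open>auto simp: firm_def optimal_selection_def\<close>)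

lemma post_sum: assumes "s' \<in> S'" shows "(\<Sum>th\<in>Th. posterior Th q pr' s' th) = 1"
  using wpos_S'[of q, OF q_pos assms] unfolding posterior_def
  by (simp add: sum_divide_distrib[symmetric])

lemma mu_s_eq: "s \<in> S \<Longrightarrow> mu_s Th S' r pr' g s = (\<Sum>th\<in>Th. r th * pr s th)"
  unfolding mu_s_def mu_def
  by (intro sum.cong refl) (simp add: pr_g sum_distrib_left mult_ac)

lemma mu_ss'_eq: "mu_ss' Th r pr' g s s' = g s s' * (\<Sum>th\<in>Th. r th * pr' s' th)"
  unfolding mu_ss'_def mu_def by (simp add: sum_distrib_left mult_ac)

lemma mu_s'_eq: "s' \<in> S' \<Longrightarrow> mu_s' Th S r pr' g s' = (\<Sum>th\<in>Th. r th * pr' s' th)"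
  unfolding mu_s'_def mu_def
  by (intro sum.cong refl) (simp add: g_sum sum_distrib_left[symmetric])

lemma mu_s_sum: "mu_s Th S' r pr' g s = (\<Sum>s'\<in>S'. mu_ss' Th r pr' g s s')"
  unfolding mu_s_def mu_ss'_def by (rule sum.swap)

lemma F_eq: assumes s': "s' \<in> S'" and gz: "g s s' \<noteq> 0"
  shows "(\<Sum>th\<in>Th. mu_th_given_ss' Th q pr' g th s s' * ahat s th)
       = expect Th (posterior Th q pr' s') (ahat s)"
  unfolding expect_def mu_th_given_ss'_def mu_ss'_eq posterior_def mu_def
  using gz by (intro sum.cong refl) (simp add: field_simps)


lemma W'_eq: "avg_pay A Th p q S' pr' = (\<Sum>s'\<in>S'. (\<Sum>th\<in>Th. p th * pr' s' th) * expect Th (posterior Th q pr' s') (ahat' s'))"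
proof -
  have "avg_pay A Th p q S' pr' = (\<Sum>th\<in>Th. \<Sum>s'\<in>S'. p th * pr' s' th * expect Th (posterior Th q pr' s') (ahat' s'))"
    unfolding avg_pay_def sum_distrib_left
    by (intro sum.cong refl) (simp add: pay_S' mult.assoc)
  also have "\<dots> = (\<Sum>s'\<in>S'. \<Sum>th\<in>Th. p th * pr' s' th * expect Th (posterior Th q pr' s') (ahat' s'))"
    by (rule sum.swap)
  also have "\<dots> = (\<Sum>s'\<in>S'. (\<Sum>th\<in>Th. p th * pr' s' th) * expect Th (posterior Th q pr' s') (ahat' s'))"
    by (simp add: sum_distrib_right)
  finally show ?thesis .
qed

lemma W_eq: "avg_pay A Th p q S pr = (\<Sum>s\<in>S. (\<Sum>th\<in>Th. p th * pr s th) * expect Th (posterior Th q pr s) (ahat s))"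
proof -
  have "avg_pay A Th p q S pr = (\<Sum>th\<in>Th. \<Sum>s\<in>S. p th * pr s th * expect Th (posterior Th q pr s) (ahat s))"
    unfolding avg_pay_def sum_distrib_left
    by (intro sum.cong refl) (simp add: pay_S mult.assoc)
  also have "\<dots> = (\<Sum>s\<in>S. \<Sum>th\<in>Th. p th * pr s th * expect Th (posterior Th q pr s) (ahat s))"
    by (rule sum.swap)
  also have "\<dots> = (\<Sum>s\<in>S. (\<Sum>th\<in>Th. p th * pr s th) * expect Th (posterior Th q pr s) (ahat s))"
    by (simp add: sum_distrib_right)
  finally show ?thesis .
qed

lemma I_eq: "instrumental Th p q S S' pr' g ahat ahat' =
  (\<Sum>s'\<in>S'. (\<Sum>th\<in>Th. p th * pr' s' th) * (expect Th (posterior Th q pr' s') (ahat' s')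
      - (\<Sum>s\<in>S. g s s' * expect Th (posterior Th q pr' s') (ahat s))))"
  unfolding instrumental_def
proof (intro sum.cong refl)
  fix s' assume s': "s' \<in> S'"
  have "(\<Sum>th\<in>Th. posterior Th q pr' s' th * (\<Sum>s\<in>S. g s s' * ahat s th))
      = (\<Sum>th\<in>Th. \<Sum>s\<in>S. g s s' * (posterior Th q pr' s' th * ahat s th))"
    by (simp add: sum_distrib_left mult_ac)
  also have "\<dots> = (\<Sum>s\<in>S. g s s' * expect Th (posterior Th q pr' s') (ahat s))"
    by (subst sum.swap) (simp add: expect_def sum_distrib_left)
  finally have e: "(\<Sum>th\<in>Th. posterior Th q pr' s' th * (\<Sum>s\<in>S. g s s' * ahat s th))
      = (\<Sum>s\<in>S. g s s' * expect Th (posterior Th q pr' s') (ahat s))" .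
  show "mu_s' Th S p pr' g s' * (\<Sum>th\<in>Th. posterior Th q pr' s' th * (ahat' s' th - (\<Sum>s\<in>S. g s s' * ahat s th))) =
      (\<Sum>th\<in>Th. p th * pr' s' th) * (expect Th (posterior Th q pr' s') (ahat' s')
      - (\<Sum>s\<in>S. g s s' * expect Th (posterior Th q pr' s') (ahat s)))"
    unfolding mu_s'_eq[OF s'] e[symmetric]
    by (simp add: expect_def right_diff_distrib sum_subtractf)
qed

lemma mu_s_pos: "s \<in> S \<Longrightarrow> (\<And>th. th \<in> Th \<Longrightarrow> r th > 0) \<Longrightarrow> mu_s Th S' r pr' g s > 0"
  using wpos_S mu_s_eq by simp

lemma C_split: "perception_correcting Th p q S S' pr' g ahat =
   (\<Sum>s\<in>S. mu_s Th S' p pr' g s * (\<Sum>s'\<in>S'. mu_s'_given_s Th S' p pr' g s' s *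
           (\<Sum>th\<in>Th. mu_th_given_ss' Th q pr' g th s s' * ahat s th)))
 - (\<Sum>s\<in>S. mu_s Th S' p pr' g s * (\<Sum>s'\<in>S'. mu_s'_given_s Th S' q pr' g s' s *
           (\<Sum>th\<in>Th. mu_th_given_ss' Th q pr' g th s s' * ahat s th)))"
  unfolding perception_correcting_def
  by (simp add: left_diff_distrib right_diff_distrib sum_subtractf)

lemma C1_eq: "(\<Sum>s\<in>S. mu_s Th S' p pr' g s * (\<Sum>s'\<in>S'. mu_s'_given_s Th S' p pr' g s' s *
           (\<Sum>th\<in>Th. mu_th_given_ss' Th q pr' g th s s' * ahat s th)))
  = (\<Sum>s'\<in>S'. (\<Sum>th\<in>Th. p th * pr' s' th) * (\<Sum>s\<in>S. g s s' * expect Th (posterior Th q pr' s') (ahat s)))"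
proof -
  have "(\<Sum>s\<in>S. mu_s Th S' p pr' g s * (\<Sum>s'\<in>S'. mu_s'_given_s Th S' p pr' g s' s *
           (\<Sum>th\<in>Th. mu_th_given_ss' Th q pr' g th s s' * ahat s th)))
     = (\<Sum>s\<in>S. \<Sum>s'\<in>S'. (\<Sum>th\<in>Th. p th * pr' s' th) * (g s s' * expect Th (posterior Th q pr' s') (ahat s)))"
  proof (intro sum.cong refl)
    fix s assume s: "s \<in> S"
    have pos: "mu_s Th S' p pr' g s > 0" using mu_s_pos[of s p, OF s p_pos] .
    show "mu_s Th S' p pr' g s * (\<Sum>s'\<in>S'. mu_s'_given_s Th S' p pr' g s' s *
           (\<Sum>th\<in>Th. mu_th_given_ss' Th q pr' g th s s' * ahat s th)) =
          (\<Sum>s'\<in>S'. (\<Sum>th\<in>Th. p th * pr' s' th) * (g s s' * expect Th (posterior Th q pr' s') (ahat s)))"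
      unfolding sum_distrib_left[of "mu_s Th S' p pr' g s"]
    proof (rule sum.cong[OF refl])
      fix s' assume s': "s' \<in> S'"
      show "mu_s Th S' p pr' g s * (mu_s'_given_s Th S' p pr' g s' s *
           (\<Sum>th\<in>Th. mu_th_given_ss' Th q pr' g th s s' * ahat s th)) =
          (\<Sum>th\<in>Th. p th * pr' s' th) * (g s s' * expect Th (posterior Th q pr' s') (ahat s))"
      proof (cases "g s s' = 0")
        case True
        then show ?thesis unfolding mu_s'_given_s_def mu_ss'_eq by simp
      next
        case False
        then show ?thesis unfolding mu_s'_given_s_def F_eq[OF s' False] mu_ss'_eq
          using pos by (simp add: field_simps)
      qed
    qed
  qed
  also have "\<dots> = (\<Sum>s'\<in>S'. \<Sum>s\<in>S. (\<Sum>th\<in>Th. p th * pr' s' th) * (g s s' * expect Th (posterior Th q pr' s') (ahat s)))"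
    by (rule sum.swap)
  also have "\<dots> = (\<Sum>s'\<in>S'. (\<Sum>th\<in>Th. p th * pr' s' th) * (\<Sum>s\<in>S. g s s' * expect Th (posterior Th q pr' s') (ahat s)))"
    by (simp add: sum_distrib_left)
  finally show ?thesis .
qed

lemma C2_eq: "(\<Sum>s\<in>S. mu_s Th S' p pr' g s * (\<Sum>s'\<in>S'. mu_s'_given_s Th S' q pr' g s' s *
           (\<Sum>th\<in>Th. mu_th_given_ss' Th q pr' g th s s' * ahat s th)))
  = avg_pay A Th p q S pr"
  unfolding W_eq
proof (intro sum.cong refl)
  fix s assume s: "s \<in> S"
  have posq: "mu_s Th S' q pr' g s > 0" using mu_s_pos[of s q, OF s q_pos] .
  have step: "mu_s'_given_s Th S' q pr' g s' s * (\<Sum>th\<in>Th. mu_th_given_ss' Th q pr' g th s s' * ahat s th)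
     = (\<Sum>th\<in>Th. mu q pr' g th s s' * ahat s th) / mu_s Th S' q pr' g s" if s': "s' \<in> S'" for s'
  proof (cases "g s s' = 0")
    case True
    then show ?thesis unfolding mu_s'_given_s_def mu_ss'_eq mu_def by simp
  next
    case False
    have "mu_ss' Th q pr' g s s' \<noteq> 0" unfolding mu_ss'_eq using False wpos_S'[of q, OF q_pos s'] by simp
    then show ?thesis unfolding mu_s'_given_s_def mu_th_given_ss'_def
      by (simp add: sum_distrib_left sum_divide_distrib)
  qed
  have "(\<Sum>s'\<in>S'. \<Sum>th\<in>Th. mu q pr' g th s s' * ahat s th) = (\<Sum>th\<in>Th. \<Sum>s'\<in>S'. mu q pr' g th s s' * ahat s th)"
    by (rule sum.swap)
  also have "\<dots> = (\<Sum>th\<in>Th. q th * pr s th * ahat s th)"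
  proof (intro sum.cong refl)
    fix th assume th: "th \<in> Th"
    show "(\<Sum>s'\<in>S'. mu q pr' g th s s' * ahat s th) = q th * pr s th * ahat s th"
      unfolding pr_g[OF s th] mu_def by (simp add: sum_distrib_left sum_distrib_right mult_ac)
  qed
  finally have e: "(\<Sum>s'\<in>S'. \<Sum>th\<in>Th. mu q pr' g th s s' * ahat s th) = (\<Sum>th\<in>Th. q th * pr s th * ahat s th)" .
  have ex: "expect Th (posterior Th q pr s) (ahat s) = (\<Sum>th\<in>Th. q th * pr s th * ahat s th) / mu_s Th S' q pr' g s"
    unfolding expect_def posterior_def mu_s_eq[OF s] by (simp add: sum_divide_distrib)
  show "mu_s Th S' p pr' g s * (\<Sum>s'\<in>S'. mu_s'_given_s Th S' q pr' g s' s *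
           (\<Sum>th\<in>Th. mu_th_given_ss' Th q pr' g th s s' * ahat s th)) =
        (\<Sum>th\<in>Th. p th * pr s th) * expect Th (posterior Th q pr s) (ahat s)"
  proof -
    have "(\<Sum>s'\<in>S'. mu_s'_given_s Th S' q pr' g s' s *
           (\<Sum>th\<in>Th. mu_th_given_ss' Th q pr' g th s s' * ahat s th))
       = (\<Sum>s'\<in>S'. (\<Sum>th\<in>Th. mu q pr' g th s s' * ahat s th) / mu_s Th S' q pr' g s)"
      by (rule sum.cong[OF refl step])
    also have "\<dots> = (\<Sum>th\<in>Th. q th * pr s th * ahat s th) / mu_s Th S' q pr' g s"
      unfolding sum_divide_distrib[symmetric] e ..
    finally show ?thesis unfolding ex mu_s_eq[OF s, of p] by simp
  qed
qed

lemma part_a: "avg_pay A Th p q S' pr' - avg_pay A Th p q S pr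
       = perception_correcting Th p q S S' pr' g ahat + instrumental Th p q S S' pr' g ahat ahat'"
  unfolding C_split C1_eq C2_eq I_eq W'_eq
  by (simp add: right_diff_distrib sum_subtractf)

lemma part_b: "instrumental Th p q S S' pr' g ahat ahat' \<ge> 0"
  unfolding I_eq
proof (rule sum_nonneg, rule mult_nonneg_nonneg)
  fix s' assume s': "s' \<in> S'"
  show "0 \<le> (\<Sum>th\<in>Th. p th * pr' s' th)"
    by (intro sum_nonneg mult_nonneg_nonneg) (auto intro: less_imp_le p_pos pr'_nn[OF s'])
  have "(\<Sum>s\<in>S. g s s' * expect Th (posterior Th q pr' s') (ahat s))
      \<le> (\<Sum>s\<in>S. g s s' * expect Th (posterior Th q pr' s') (ahat' s'))"
  proof (intro sum_mono mult_left_mono)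
    fix s assume s: "s \<in> S"
    show "0 \<le> g s s'" using g_nn[OF s s'] .
    show "expect Th (posterior Th q pr' s') (ahat s) \<le> expect Th (posterior Th q pr' s') (ahat' s')"
      using sel sel' s s' unfolding optimal_selection_def by blast
  qed
  also have "\<dots> = expect Th (posterior Th q pr' s') (ahat' s')"
    by (simp add: sum_distrib_right[symmetric] g_sum[OF s'])
  finally show "0 \<le> expect Th (posterior Th q pr' s') (ahat' s') - (\<Sum>s\<in>S. g s s' * expect Th (posterior Th q pr' s') (ahat s))"
    by simp
qed


lemma tp2:
  assumes mlr: "MLR Th S' pr'" and lr: "lr_ge Th r1 r2"
    and x: "x \<in> S'" and y: "y \<in> S'" and xy: "x < y"
  shows "(\<Sum>th\<in>Th. r2 th * pr' x th) * (\<Sum>th\<in>Th. r1 th * pr' y th)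
       - (\<Sum>th\<in>Th. r2 th * pr' y th) * (\<Sum>th\<in>Th. r1 th * pr' x th) \<ge> 0"
proof -
  have "(\<Sum>th\<in>Th. r2 th * pr' x th) * (\<Sum>th\<in>Th. r1 th * pr' y th)
       - (\<Sum>th\<in>Th. r2 th * pr' y th) * (\<Sum>th\<in>Th. r1 th * pr' x th)
     = (\<Sum>a\<in>Th. \<Sum>b\<in>Th. r2 a * pr' x a * (r1 b * pr' y b)) - (\<Sum>a\<in>Th. \<Sum>b\<in>Th. r2 a * pr' y a * (r1 b * pr' x b))"
    by (simp only: sum_product)
  also have "\<dots> = (\<Sum>a\<in>Th. \<Sum>b\<in>Th. r2 a * pr' x a * (r1 b * pr' y b) - r2 a * pr' y a * (r1 b * pr' x b))"
    by (simp only: sum_subtractf[symmetric])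
  also have "\<dots> = (\<Sum>a\<in>Th. \<Sum>b\<in>Th. r2 a * r1 b * (pr' x a * pr' y b - pr' y a * pr' x b))"
    by (intro sum.cong refl) (simp add: algebra_simps)
  also have "\<dots> \<ge> 0"
  proof (rule double_sum_nonneg_ord[OF Th])
    fix a b assume a: "a \<in> Th" and b: "b \<in> Th" and ab: "a < b"
    have 1: "r2 a * r1 b - r2 b * r1 a \<ge> 0" using lr a b ab unfolding lr_ge_def by auto
    have 2: "pr' x a * pr' y b - pr' y a * pr' x b \<ge> 0" using mlr a b ab x y xy unfolding MLR_def
      by (auto simp: mult_ac)
    have "(r2 a * r1 b - r2 b * r1 a) * (pr' x a * pr' y b - pr' y a * pr' x b) \<ge> 0"
      using 1 2 by simp
    then show "0 \<le> r2 a * r1 b * (pr' x a * pr' y b - pr' y a * pr' x b) +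
                  r2 b * r1 a * (pr' x b * pr' y a - pr' y b * pr' x a)"
      by (simp add: algebra_simps)
  qed simp
  finally show ?thesis .
qed

lemma F_mono:
  assumes mono: "monotone_firm Th A" and mlr: "MLR Th S' pr'" and s: "s \<in> S"
    and x: "x \<in> S'" and y: "y \<in> S'" and xy: "x < y"
  shows "expect Th (posterior Th q pr' x) (ahat s) \<le> expect Th (posterior Th q pr' y) (ahat s)"
  unfolding expect_def
proof (rule lr_expect_mono[OF Th post_sum[OF x] post_sum[OF y]])
  fix a b assume a: "a \<in> Th" and b: "b \<in> Th" and ab: "a < b"
  have "ahat s \<in> A" using sel s unfolding optimal_selection_def by blast
  then have 1: "ahat s b - ahat s a \<ge> 0" using mono a b ab
    unfolding monotone_firm_def monotone_task_def by (auto intro: less_imp_le)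
  have 2: "pr' x a * pr' y b - pr' y a * pr' x b \<ge> 0" using mlr a b ab x y xy unfolding MLR_def
    by (auto simp: mult_ac)
  have Zx: "(\<Sum>th\<in>Th. q th * pr' x th) > 0" using wpos_S'[of q, OF q_pos x] .
  have Zy: "(\<Sum>th\<in>Th. q th * pr' y th) > 0" using wpos_S'[of q, OF q_pos y] .
  have "posterior Th q pr' x a * posterior Th q pr' y b - posterior Th q pr' x b * posterior Th q pr' y a
     = q a * q b * (pr' x a * pr' y b - pr' y a * pr' x b) / ((\<Sum>th\<in>Th. q th * pr' x th) * (\<Sum>th\<in>Th. q th * pr' y th))"
    unfolding posterior_def using Zx Zy by (simp add: field_simps)
  also have "\<dots> \<ge> 0" using 2 Zx Zy q_pos[OF a] q_pos[OF b] by simp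
  finally show "0 \<le> (ahat s b - ahat s a) * (posterior Th q pr' x a * posterior Th q pr' y b - posterior Th q pr' x b * posterior Th q pr' y a)"
    using 1 by simp
qed


lemma cond_sum: assumes r: "\<And>th. th \<in> Th \<Longrightarrow> r th > 0" and s: "s \<in> S"
  shows "(\<Sum>s'\<in>S'. mu_s'_given_s Th S' r pr' g s' s) = 1"
  unfolding mu_s'_given_s_def sum_divide_distrib[symmetric] mu_s_sum[symmetric]
  using mu_s_pos[of s r, OF s r] by simp

lemma Cs_mono:
  assumes mono: "monotone_firm Th A" and mlr: "MLR Th S' pr'"
    and r1: "\<And>th. th \<in> Th \<Longrightarrow> r1 th > 0" and r2: "\<And>th. th \<in> Th \<Longrightarrow> r2 th > 0"
    and lr: "lr_ge Th r1 r2" and s: "s \<in> S"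
  shows "(\<Sum>s'\<in>S'. mu_s'_given_s Th S' r2 pr' g s' s * (\<Sum>th\<in>Th. mu_th_given_ss' Th q pr' g th s s' * ahat s th))
      \<le> (\<Sum>s'\<in>S'. mu_s'_given_s Th S' r1 pr' g s' s * (\<Sum>th\<in>Th. mu_th_given_ss' Th q pr' g th s s' * ahat s th))"
proof (rule lr_expect_mono[OF finS' cond_sum[OF r2 s] cond_sum[OF r1 s]])
  fix x y assume x: "x \<in> S'" and y: "y \<in> S'" and xy: "x < y"
  define m1x where "m1x = (\<Sum>th\<in>Th. r1 th * pr' x th)"
  define m1y where "m1y = (\<Sum>th\<in>Th. r1 th * pr' y th)"
  define m2x where "m2x = (\<Sum>th\<in>Th. r2 th * pr' x th)"
  define m2y where "m2y = (\<Sum>th\<in>Th. r2 th * pr' y th)"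
  define M1 where "M1 = mu_s Th S' r1 pr' g s"
  define M2 where "M2 = mu_s Th S' r2 pr' g s"
  have M1: "M1 > 0" unfolding M1_def using mu_s_pos[of s r1, OF s r1] .
  have M2: "M2 > 0" unfolding M2_def using mu_s_pos[of s r2, OF s r2] .
  have t: "m2x * m1y - m2y * m1x \<ge> 0" unfolding m1x_def m1y_def m2x_def m2y_def
    using tp2[OF mlr lr x y xy] .
  have eq: "mu_s'_given_s Th S' r2 pr' g x s * mu_s'_given_s Th S' r1 pr' g y s
      - mu_s'_given_s Th S' r2 pr' g y s * mu_s'_given_s Th S' r1 pr' g x s
      = g s x * g s y * (m2x * m1y - m2y * m1x) / (M2 * M1)"
    unfolding mu_s'_given_s_def mu_ss'_eq m1x_def m1y_def m2x_def m2y_def M1_def[symmetric] M2_def[symmetric]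
    using M1 M2 by (simp add: field_simps)
  show "0 \<le> ((\<Sum>th\<in>Th. mu_th_given_ss' Th q pr' g th s y * ahat s th) - (\<Sum>th\<in>Th. mu_th_given_ss' Th q pr' g th s x * ahat s th)) *
      (mu_s'_given_s Th S' r2 pr' g x s * mu_s'_given_s Th S' r1 pr' g y s
      - mu_s'_given_s Th S' r2 pr' g y s * mu_s'_given_s Th S' r1 pr' g x s)"
  proof (cases "g s x = 0 \<or> g s y = 0")
    case True
    then show ?thesis unfolding eq by auto
  next
    case False
    then have gx: "g s x \<noteq> 0" and gy: "g s y \<noteq> 0" by auto
    have d: "(\<Sum>th\<in>Th. mu_th_given_ss' Th q pr' g th s y * ahat s th) - (\<Sum>th\<in>Th. mu_th_given_ss' Th q pr' g th s x * ahat s th) \<ge> 0"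
      unfolding F_eq[OF x gx] F_eq[OF y gy] using F_mono[OF mono mlr s x y xy] by simp
    have nn: "g s x * g s y * (m2x * m1y - m2y * m1x) / (M2 * M1) \<ge> 0"
      using g_nn[OF s x] g_nn[OF s y] t M1 M2 by simp
    show ?thesis unfolding eq by (rule mult_nonneg_nonneg[OF d nn])
  qed
qed

lemma part_cd:
  assumes mono: "monotone_firm Th A" and mlr: "MLR Th S' pr'"
  shows "(lr_ge Th p q \<longrightarrow> perception_correcting Th p q S S' pr' g ahat \<ge> 0)
       \<and> (lr_ge Th q p \<longrightarrow> perception_correcting Th p q S S' pr' g ahat \<le> 0)"
proof -
  have C: "perception_correcting Th p q S S' pr' g ahat =
    (\<Sum>s\<in>S. mu_s Th S' p pr' g s *
     ((\<Sum>s'\<in>S'. mu_s'_given_s Th S' p pr' g s' s * (\<Sum>th\<in>Th. mu_th_given_ss' Th q pr' g th s s' * ahat s th))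
    - (\<Sum>s'\<in>S'. mu_s'_given_s Th S' q pr' g s' s * (\<Sum>th\<in>Th. mu_th_given_ss' Th q pr' g th s s' * ahat s th))))"
    unfolding perception_correcting_def
    by (simp add: left_diff_distrib right_diff_distrib sum_subtractf)
  show ?thesis
  proof (intro conjI impI)
    assume lr: "lr_ge Th p q"
    show "perception_correcting Th p q S S' pr' g ahat \<ge> 0" unfolding C
    proof (intro sum_nonneg mult_nonneg_nonneg)
      fix s assume s: "s \<in> S"
      show "0 \<le> mu_s Th S' p pr' g s" using mu_s_pos[of s p, OF s p_pos] by simp
      show "0 \<le> (\<Sum>s'\<in>S'. mu_s'_given_s Th S' p pr' g s' s * (\<Sum>th\<in>Th. mu_th_given_ss' Th q pr' g th s s' * ahat s th))
    - (\<Sum>s'\<in>S'. mu_s'_given_s Th S' q pr' g s' s * (\<Sum>th\<in>Th. mu_th_given_ss' Th q pr' g th s s' * ahat s th))"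
        using Cs_mono[OF mono mlr p_pos q_pos lr s] by simp
    qed
  next
    assume lr: "lr_ge Th q p"
    have "perception_correcting Th p q S S' pr' g ahat \<le> (\<Sum>s\<in>S. 0)" unfolding C
    proof (intro sum_mono mult_nonneg_nonpos)
      fix s assume s: "s \<in> S"
      show "0 \<le> mu_s Th S' p pr' g s" using mu_s_pos[of s p, OF s p_pos] by simp
      show "(\<Sum>s'\<in>S'. mu_s'_given_s Th S' p pr' g s' s * (\<Sum>th\<in>Th. mu_th_given_ss' Th q pr' g th s s' * ahat s th))
    - (\<Sum>s'\<in>S'. mu_s'_given_s Th S' q pr' g s' s * (\<Sum>th\<in>Th. mu_th_given_ss' Th q pr' g th s s' * ahat s th)) \<le> 0"
        using Cs_mono[OF mono mlr q_pos p_pos lr s] by simp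
    qed
    then show "perception_correcting Th p q S S' pr' g ahat \<le> 0" by simp
  qed
qed

end

theorem theorem1:
  fixes Th :: "real set" and A :: "(real \<Rightarrow> real) set"
    and p q :: "real \<Rightarrow> real"
    and S :: "'s set" and pr :: "'s \<Rightarrow> real \<Rightarrow> real"
    and S' :: "real set" and pr' :: "real \<Rightarrow> real \<Rightarrow> real"
    and g :: "'s \<Rightarrow> real \<Rightarrow> real"
    and ahat :: "'s \<Rightarrow> real \<Rightarrow> real" and ahat' :: "real \<Rightarrow> real \<Rightarrow> real"
  assumes Th: "finite Th" "card Th \<ge> 2"
    and A: "firm A"
    and p: "full_support_dist Th p" and q: "full_support_dist Th q"
    and S: "signal_structure Th S pr" and S': "signal_structure Th S' pr'"
    and g: "garbling Th S pr S' pr' g"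
    and sel: "optimal_selection A Th q S pr ahat"
    and sel': "optimal_selection A Th q S' pr' ahat'"
  shows
    "avg_pay A Th p q S' pr' - avg_pay A Th p q S pr
       = perception_correcting Th p q S S' pr' g ahat + instrumental Th p q S S' pr' g ahat ahat'
     \<and> instrumental Th p q S S' pr' g ahat ahat' \<ge> 0
     \<and> (monotone_firm Th A \<and> MLR Th S' pr' \<longrightarrow>
          (lr_ge Th p q \<longrightarrow> perception_correcting Th p q S S' pr' g ahat \<ge> 0)
        \<and> (lr_ge Th q p \<longrightarrow> perception_correcting Th p q S S' pr' g ahat \<le> 0))"
  using part_a[OF Th(1) A p q S S' g sel sel'] part_b[OF Th(1) A p q S S' g sel sel']
    part_cd[OF Th(1) A p q S S' g sel sel'] by blast

end
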